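(* Let $X$ be a Banach space and $M,N:\Sigma\to cb(X)$ two consistent $d_H$-multimeasures. If there is a non-negative bounded measurable function $\theta:\Omega\to\mathbb R$ such that $j\circ M(E)=(BDS)\int_E\theta\,d(j\circ N)$ for every $E\in\Sigma$, then $\theta$ is $BDS_m$-integrable with respect to $N$ and $M(E)=\int_E\theta\,dN$ for every $E\in\Sigma$.
   Context: $(\Omega,\Sigma)$ is a measurable space, $X$ a Banach space with dual unit ball $B_{X'}$. $cb(X)$: nonempty closed bounded convex subsets of $X$ with Hausdorff metric $d_H$; $s(x',C)=\sup\{\langle x',x\rangle:x\in C\}$. A $d_H$-multimeasure is $M:\Sigma\to cb(X)$ countably additive in $d_H$. $-N$: $E\mapsto\{-x:x\in N(E)\}$. $\mathcal N(M)=\{E:M(E)=\{0\}\}$; $M,N$ are consistent if there is $H\in\Sigma$ such that both are pointless on $H$ (no $E\subseteq H$, $E\in\Sigma\setminus\mathcal N$, on which the restriction is of the form $F\mapsto\{\kappa(F)\}$ with $\kappa$ a countably additive vector measure) and both are of that vector form on $\Omega\setminus H$. Rådström embedding: $j(A)=s(\cdot,A)|_{B_{X'}}\in\ell_\infty(B_{X'})$. For a vector measure $n:\Sigma\to Y$, $(BDS)\int_Ef\,dn$ is the element $\nu(E)\in Y$ with $\langle y',\nu(E)\rangle=\int_Ef\,d\langle y',n\rangle$ for all $y'\in Y'$. $BDS_m$-integral: measurable $f$ is $BDS_m$-integrable w.r.t. $N$ if for all $E,x'$ the expression $\int_Ef^+ds(x',N)+\int_Ef^-ds(x',-N)$ makes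 sense and for each $E$ there is a nonempty closed convex $M_f(E)$ with $s(x',M_f(E))$ equal to it for all $x'\in X'$; $\int_Ef\,dN:=M_f(E)$. *)

theory Defs
  imports "HOL-Analysis.Analysis" "HOL-Library.Set_Algebras"
begin

definition cb :: "'x::real_normed_vector set \<Rightarrow> bool" where
  "cb C \<longleftrightarrow> C \<noteq> {} \<and> closed C \<and> bounded C \<and> convex C"

definition supp :: "('x::real_normed_vector \<Rightarrow>\<^sub>L real) \<Rightarrow> 'x set \<Rightarrow> real" where
  "supp x' C = Sup ((\<lambda>x. blinfun_apply x' x) ` C)"

definition hausdorff_dist :: "'x::real_normed_vector set \<Rightarrow> 'x set \<Rightarrow> real" where
  "hausdorff_dist A B = max (SUP a\<in>A. infdist a B) (SUP b\<in>B. infdist b A)"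

text \<open>Addition in cb(X): closure of the Minkowski sum; finite sums of a sequence.\<close>
primrec cb_partial_sum :: "(nat \<Rightarrow> 'x::real_normed_vector set) \<Rightarrow> nat \<Rightarrow> 'x set" where
  "cb_partial_sum A 0 = {0}"
| "cb_partial_sum A (Suc n) = closure (cb_partial_sum A n + A n)"

definition dH_multimeasure :: "'a measure \<Rightarrow> ('a set \<Rightarrow> 'x::real_normed_vector set) \<Rightarrow> bool" where
  "dH_multimeasure \<Omega> M \<longleftrightarrow>
     (\<forall>E\<in>sets \<Omega>. cb (M E)) \<and>
     (\<forall>F::nat \<Rightarrow> 'a set. range F \<subseteq> sets \<Omega> \<longrightarrow> disjoint_family F \<longrightarrow>
        (\<lambda>n. hausdorff_dist (cb_partial_sum (\<lambda>k. M (F k)) n) (M (\<Union>k. F k))) \<longlonglongrightarrow> 0)"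

definition ca_vector_measure_on :: "'a measure \<Rightarrow> 'a set \<Rightarrow> ('a set \<Rightarrow> 'x::real_normed_vector) \<Rightarrow> bool" where
  "ca_vector_measure_on \<Omega> E \<kappa> \<longleftrightarrow>
     (\<forall>F::nat \<Rightarrow> 'a set. range F \<subseteq> sets \<Omega> \<longrightarrow> (\<forall>n. F n \<subseteq> E) \<longrightarrow> disjoint_family F \<longrightarrow>
        (\<lambda>n. \<Sum>k<n. \<kappa> (F k)) \<longlonglongrightarrow> \<kappa> (\<Union>k. F k))"

definition vector_form_on :: "'a measure \<Rightarrow> ('a set \<Rightarrow> 'x::real_normed_vector set) \<Rightarrow> 'a set \<Rightarrow> bool" where
  "vector_form_on \<Omega> M E \<longleftrightarrow>
     (\<exists>\<kappa>. ca_vector_measure_on \<Omega> E \<kappa> \<and> (\<forall>F\<in>sets \<Omega>. F \<subseteq> E \<longrightarrow> M F = {\<kappa> F}))"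

definition pointless_on :: "'a measure \<Rightarrow> ('a set \<Rightarrow> 'x::real_normed_vector set) \<Rightarrow> 'a set \<Rightarrow> bool" where
  "pointless_on \<Omega> M H \<longleftrightarrow>
     \<not> (\<exists>E\<in>sets \<Omega>. E \<subseteq> H \<and> M E \<noteq> {0} \<and> vector_form_on \<Omega> M E)"

definition consistent :: "'a measure \<Rightarrow> ('a set \<Rightarrow> 'x::real_normed_vector set) \<Rightarrow> ('a set \<Rightarrow> 'x set) \<Rightarrow> bool" where
  "consistent \<Omega> M N \<longleftrightarrow>
     (\<exists>H\<in>sets \<Omega>. pointless_on \<Omega> M H \<and> pointless_on \<Omega> N H \<and>
        vector_form_on \<Omega> M (space \<Omega> - H) \<and> vector_form_on \<Omega> N (space \<Omega> - H))"

text \<open>Hahn decomposition and Jordan decomposition of a real-valued countably additive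
  set function \<mu> on sets \<Omega>; \<open>\<integral>_E f d\<mu>\<close> is \<open>\<integral>_E f d\<mu>\<^sup>+ - \<integral>_E f d\<mu>\<^sup>-\<close>.\<close>
definition hahn_pos :: "'a measure \<Rightarrow> ('a set \<Rightarrow> real) \<Rightarrow> 'a set" where
  "hahn_pos \<Omega> \<mu> = (SOME P. P \<in> sets \<Omega> \<and>
      (\<forall>A\<in>sets \<Omega>. A \<subseteq> P \<longrightarrow> 0 \<le> \<mu> A) \<and>
      (\<forall>A\<in>sets \<Omega>. A \<subseteq> space \<Omega> - P \<longrightarrow> \<mu> A \<le> 0))"

definition pos_var :: "'a measure \<Rightarrow> ('a set \<Rightarrow> real) \<Rightarrow> 'a measure" where
  "pos_var \<Omega> \<mu> = measure_of (space \<Omega>) (sets \<Omega>) (\<lambda>A. ennreal (\<mu> (A \<inter> hahn_pos \<Omega> \<mu>)))"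

definition neg_var :: "'a measure \<Rightarrow> ('a set \<Rightarrow> real) \<Rightarrow> 'a measure" where
  "neg_var \<Omega> \<mu> = measure_of (space \<Omega>) (sets \<Omega>) (\<lambda>A. ennreal (- \<mu> (A - hahn_pos \<Omega> \<mu>)))"

definition signed_integrable_on :: "'a measure \<Rightarrow> ('a set \<Rightarrow> real) \<Rightarrow> ('a \<Rightarrow> real) \<Rightarrow> 'a set \<Rightarrow> bool" where
  "signed_integrable_on \<Omega> \<mu> f E \<longleftrightarrow>
     integrable (pos_var \<Omega> \<mu>) (\<lambda>x. indicator E x * f x) \<and>
     integrable (neg_var \<Omega> \<mu>) (\<lambda>x. indicator E x * f x)"

definition signed_integral_on :: "'a measure \<Rightarrow> ('a set \<Rightarrow> real) \<Rightarrow> ('a \<Rightarrow> real) \<Rightarrow> 'a set \<Rightarrow> real" where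
  "signed_integral_on \<Omega> \<mu> f E =
     (\<integral>x. indicator E x * f x \<partial>pos_var \<Omega> \<mu>) - (\<integral>x. indicator E x * f x \<partial>neg_var \<Omega> \<mu>)"

definition dual_ball :: "('x::real_normed_vector \<Rightarrow>\<^sub>L real) set" where
  "dual_ball = {x'. norm x' \<le> 1}"

text \<open>l_infinity(B_X'), realised as bounded functions on B_X' vanishing outside B_X'.\<close>
definition linf :: "(('x::real_normed_vector \<Rightarrow>\<^sub>L real) \<Rightarrow> real) set" where
  "linf = {g. bounded (g ` dual_ball) \<and> (\<forall>x'. x' \<notin> dual_ball \<longrightarrow> g x' = 0)}"

definition linf_norm :: "(('x::real_normed_vector \<Rightarrow>\<^sub>L real) \<Rightarrow> real) \<Rightarrow> real" where
  "linf_norm g = (SUP x'\<in>dual_ball. \<bar>g x'\<bar>)"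

definition linf_dual :: "((('x::real_normed_vector \<Rightarrow>\<^sub>L real) \<Rightarrow> real) \<Rightarrow> real) set" where
  "linf_dual = {\<phi>. (\<forall>g\<in>linf. \<forall>h\<in>linf. \<forall>a b. \<phi> (\<lambda>x'. a * g x' + b * h x') = a * \<phi> g + b * \<phi> h) \<and>
                   (\<exists>C. \<forall>g\<in>linf. \<bar>\<phi> g\<bar> \<le> C * linf_norm g)}"

definition radstrom :: "'x::real_normed_vector set \<Rightarrow> (('x \<Rightarrow>\<^sub>L real) \<Rightarrow> real)" where
  "radstrom A = (\<lambda>x'. if x' \<in> dual_ball then supp x' A else 0)"

definition is_BDS_integral_linf ::
  "'a measure \<Rightarrow> ('a set \<Rightarrow> (('x::real_normed_vector \<Rightarrow>\<^sub>L real) \<Rightarrow> real)) \<Rightarrow> ('a \<Rightarrow> real) \<Rightarrow> 'a set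
     \<Rightarrow> (('x \<Rightarrow>\<^sub>L real) \<Rightarrow> real) \<Rightarrow> bool" where
  "is_BDS_integral_linf \<Omega> n f E v \<longleftrightarrow> v \<in> linf \<and>
     (\<forall>\<phi>\<in>linf_dual. signed_integrable_on \<Omega> (\<lambda>A. \<phi> (n A)) f E \<and>
                     \<phi> v = signed_integral_on \<Omega> (\<lambda>A. \<phi> (n A)) f E)"

text \<open>\<open>\<integral>_E f\<^sup>+ ds(x',N) + \<integral>_E f\<^sup>- ds(x',-N)\<close>; note s(x',-N(F)) = s(-x',N(F)).\<close>
definition BDSm_sense :: "'a measure \<Rightarrow> ('a set \<Rightarrow> 'x::real_normed_vector set) \<Rightarrow> ('a \<Rightarrow> real)
     \<Rightarrow> 'a set \<Rightarrow> ('x \<Rightarrow>\<^sub>L real) \<Rightarrow> bool" where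
  "BDSm_sense \<Omega> N f E x' \<longleftrightarrow>
     signed_integrable_on \<Omega> (\<lambda>F. supp x' (N F)) (\<lambda>\<omega>. max (f \<omega>) 0) E \<and>
     signed_integrable_on \<Omega> (\<lambda>F. supp x' (uminus ` N F)) (\<lambda>\<omega>. max (- f \<omega>) 0) E"

definition BDSm_expr :: "'a measure \<Rightarrow> ('a set \<Rightarrow> 'x::real_normed_vector set) \<Rightarrow> ('a \<Rightarrow> real)
     \<Rightarrow> 'a set \<Rightarrow> ('x \<Rightarrow>\<^sub>L real) \<Rightarrow> real" where
  "BDSm_expr \<Omega> N f E x' =
     signed_integral_on \<Omega> (\<lambda>F. supp x' (N F)) (\<lambda>\<omega>. max (f \<omega>) 0) E +
     signed_integral_on \<Omega> (\<lambda>F. supp x' (uminus ` N F)) (\<lambda>\<omega>. max (- f \<omega>) 0) E"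

definition is_BDSm_integral :: "'a measure \<Rightarrow> ('a set \<Rightarrow> 'x::real_normed_vector set) \<Rightarrow> ('a \<Rightarrow> real)
     \<Rightarrow> 'a set \<Rightarrow> 'x set \<Rightarrow> bool" where
  "is_BDSm_integral \<Omega> N f E C \<longleftrightarrow> C \<noteq> {} \<and> closed C \<and> convex C \<and>
     (\<forall>x'. supp x' C = BDSm_expr \<Omega> N f E x')"

definition BDSm_integrable :: "'a measure \<Rightarrow> ('a set \<Rightarrow> 'x::real_normed_vector set) \<Rightarrow> ('a \<Rightarrow> real) \<Rightarrow> bool" where
  "BDSm_integrable \<Omega> N f \<longleftrightarrow> f \<in> borel_measurable \<Omega> \<and>
     (\<forall>E\<in>sets \<Omega>. \<forall>x'. BDSm_sense \<Omega> N f E x') \<and>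
     (\<forall>E\<in>sets \<Omega>. \<exists>C. is_BDSm_integral \<Omega> N f E C)"

end

theory Submission
  imports Defs
begin

lemma Least_no_least_eq:
  fixes P Q :: "real \<Rightarrow> bool"
  assumes "\<not> (\<exists>x. P x \<and> (\<forall>y. P y \<longrightarrow> x \<le> y))" "\<not> (\<exists>x. Q x \<and> (\<forall>y. Q y \<longrightarrow> x \<le> y))"
  shows "Least P = Least Q"
proof -
  have "(\<lambda>x. P x \<and> (\<forall>y. P y \<longrightarrow> x \<le> y)) = (\<lambda>x. Q x \<and> (\<forall>y. Q y \<longrightarrow> x \<le> y))"
    using assms by (intro ext) blast
  then show ?thesis unfolding Least_def by simp
qed

lemma Sup_bad_eq:
  fixes S :: "real set"
  assumes "S = {} \<or> \<not> bdd_above S"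
  shows "Sup S = Sup ({}::real set)"
proof -
  have nl: "\<not> (\<exists>x. (\<forall>s\<in>S. s \<le> x) \<and> (\<forall>y. (\<forall>s\<in>S. s \<le> y) \<longrightarrow> x \<le> y))"
  proof
    assume "\<exists>x. (\<forall>s\<in>S. s \<le> x) \<and> (\<forall>y. (\<forall>s\<in>S. s \<le> y) \<longrightarrow> x \<le> y)"
    then obtain x where x: "\<forall>s\<in>S. s \<le> x" "\<forall>y. (\<forall>s\<in>S. s \<le> y) \<longrightarrow> x \<le> y" by blast
    show False
    proof (cases "S = {}")
      case True then show False using x(2)[rule_format, of "x - 1"] by simp
    next
      case False then have "\<not> bdd_above S" using assms by simp
      then show False using x(1) by (auto simp: bdd_above_def)
    qed
  qed
  have nl2: "\<not> (\<exists>x. (\<forall>s\<in>({}::real set). s \<le> x) \<and> (\<forall>y. (\<forall>s\<in>({}::real set). s \<le> y) \<longrightarrow> x \<le> y))"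
  proof
    assume "\<exists>x. (\<forall>s\<in>({}::real set). s \<le> x) \<and> (\<forall>y. (\<forall>s\<in>({}::real set). s \<le> y) \<longrightarrow> x \<le> y)"
    then obtain x :: real where "\<forall>y. x \<le> y" by blast
    then have "x \<le> x - 1" by blast
    then show False by simp
  qed
  show ?thesis unfolding Sup_real_def by (rule Least_no_least_eq[OF nl nl2])
qed

lemma supp_scale_gen:
  fixes C :: "'x::real_normed_vector set"
  assumes "0 < t"
  shows "supp (t *\<^sub>R y') C = (if C \<noteq> {} \<and> bdd_above ((\<lambda>x. blinfun_apply y' x) ` C)
            then t * supp y' C else Sup ({}::real set))"
proof (cases "C \<noteq> {} \<and> bdd_above ((\<lambda>x. blinfun_apply y' x) ` C)")
  case True
  have "t * Sup ((\<lambda>x. blinfun_apply y' x) ` C) = Sup ((*) t ` (\<lambda>x. blinfun_apply y' x) ` C)"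
  proof (rule continuous_at_Sup_mono)
    show "mono ((*) t)" using assms(1) by (auto simp: mono_def)
    show "continuous (at_left (Sup ((\<lambda>x. blinfun_apply y' x) ` C))) ((*) t)"
      by (intro continuous_intros)
    show "(\<lambda>x. blinfun_apply y' x) ` C \<noteq> {}" using True by simp
    show "bdd_above ((\<lambda>x. blinfun_apply y' x) ` C)" using True by simp
  qed
  then show ?thesis using True unfolding supp_def by (simp add: image_image blinfun.scaleR_left)
next
  case False
  have "(\<lambda>x. blinfun_apply (t *\<^sub>R y') x) ` C = (*) t ` ((\<lambda>x. blinfun_apply y' x) ` C)"
    by (auto simp: image_image blinfun.scaleR_left)
  moreover have "(*) t ` ((\<lambda>x. blinfun_apply y' x) ` C) = {} \<or>
      \<not> bdd_above ((*) t ` ((\<lambda>x. blinfun_apply y' x) ` C))"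
  proof (cases "C = {}")
    case True then show ?thesis by simp
  next
    case ne: False
    with False have nb: "\<not> bdd_above ((\<lambda>x. blinfun_apply y' x) ` C)" by simp
    have "\<not> bdd_above ((*) t ` ((\<lambda>x. blinfun_apply y' x) ` C))"
    proof
      assume "bdd_above ((*) t ` ((\<lambda>x. blinfun_apply y' x) ` C))"
      then obtain B where B: "\<And>x. x \<in> C \<Longrightarrow> t * blinfun_apply y' x \<le> B"
        by (auto simp: bdd_above_def)
      have "blinfun_apply y' x \<le> B / t" if "x \<in> C" for x
        using B[OF that] assms by (simp add: field_simps)
      then have "bdd_above ((\<lambda>x. blinfun_apply y' x) ` C)" by (auto simp: bdd_above_def)
      with nb show False by simp
    qed
    then show ?thesis by simp
  qed
  ultimately show ?thesis using False unfolding supp_def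
    by (metis Sup_bad_eq)
qed

lemma abs_le_linf_norm:
  assumes "g \<in> linf" "y' \<in> dual_ball"
  shows "\<bar>g y'\<bar> \<le> linf_norm g"
proof -
  from assms(1) have "bounded (g ` dual_ball)" by (simp add: linf_def)
  then obtain B where B: "\<forall>x\<in>g ` dual_ball. norm x \<le> B" by (auto simp: bounded_iff)
  have "bdd_above ((\<lambda>x'. \<bar>g x'\<bar>) ` dual_ball)"
    using B by (auto intro!: bdd_aboveI[of _ B])
  then show ?thesis unfolding linf_norm_def using assms(2) by (metis (no_types, lifting) cSUP_upper)
qed

lemma phi_linf_dual:
  fixes y' z' :: "'x::real_normed_vector \<Rightarrow>\<^sub>L real"
  assumes "y' \<in> dual_ball" "z' \<in> dual_ball"
  shows "(\<lambda>g. a * g y' + b * g z') \<in> linf_dual"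
proof -
  have "\<bar>a * g y' + b * g z'\<bar> \<le> (\<bar>a\<bar> + \<bar>b\<bar>) * linf_norm g" if "g \<in> linf" for g
  proof -
    have "\<bar>a * g y' + b * g z'\<bar> \<le> \<bar>a\<bar> * \<bar>g y'\<bar> + \<bar>b\<bar> * \<bar>g z'\<bar>"
      by (metis abs_mult abs_triangle_ineq)
    also have "\<dots> \<le> \<bar>a\<bar> * linf_norm g + \<bar>b\<bar> * linf_norm g"
      using abs_le_linf_norm[OF that assms(1)] abs_le_linf_norm[OF that assms(2)]
      by (intro add_mono mult_left_mono) auto
    finally show ?thesis by (simp add: distrib_right)
  qed
  moreover have "a * (p * g y' + q * h y') + b * (p * g z' + q * h z') =
     p * (a * g y' + b * g z') + q * (a * h y' + b * h z')" for p q :: real and g h :: "('x \<Rightarrow>\<^sub>L real) \<Rightarrow> real"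
    by (simp add: algebra_simps)
  ultimately show ?thesis unfolding linf_dual_def by blast
qed

theorem corollary5p10:
  fixes \<Omega> :: "'a measure"
    and M N :: "'a set \<Rightarrow> 'x::banach set"
    and \<theta> :: "'a \<Rightarrow> real"
  assumes "dH_multimeasure \<Omega> M" and "dH_multimeasure \<Omega> N"
    and "consistent \<Omega> M N"
    and "\<theta> \<in> borel_measurable \<Omega>"
    and "\<forall>\<omega>\<in>space \<Omega>. 0 \<le> \<theta> \<omega>"
    and "\<exists>K. \<forall>\<omega>\<in>space \<Omega>. \<theta> \<omega> \<le> K"
    and "\<forall>E\<in>sets \<Omega>. is_BDS_integral_linf \<Omega> (\<lambda>F. radstrom (N F)) \<theta> E (radstrom (M E))"
  shows "BDSm_integrable \<Omega> N \<theta> \<and> (\<forall>E\<in>sets \<Omega>. is_BDSm_integral \<Omega> N \<theta> E (M E))"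
proof -
  have cbM: "cb (M E)" if "E \<in> sets \<Omega>" for E
    using assms(1) that by (auto simp: dH_multimeasure_def)
  have main: "signed_integrable_on \<Omega> (\<lambda>F. supp x' (N F)) \<theta> E \<and>
      supp x' (M E) = signed_integral_on \<Omega> (\<lambda>F. supp x' (N F)) \<theta> E"
    if E: "E \<in> sets \<Omega>" for E x'
  proof -
    define c where "c = max 1 (norm x')"
    have c: "1 \<le> c" "0 < c" by (auto simp: c_def)
    define y' where "y' = (1 / c) *\<^sub>R x'"
    have y: "y' \<in> dual_ball" using c
      by (auto simp: dual_ball_def y'_def c_def field_simps)
    have y2: "(1/2) *\<^sub>R y' \<in> dual_ball" using y by (auto simp: dual_ball_def)
    have x: "x' = c *\<^sub>R y'" using c by (simp add: y'_def)
    define \<phi> where "\<phi> = (\<lambda>g::('x \<Rightarrow>\<^sub>L real) \<Rightarrow> real. (2*c - 1) * g y' + (2 - 2*c) * g ((1/2) *\<^sub>R y'))"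
    have phi: "\<phi> \<in> linf_dual" unfolding \<phi>_def by (rule phi_linf_dual[OF y y2])
    have key: "\<phi> (radstrom C) = supp x' C" for C
    proof -
      have "\<phi> (radstrom C) = (2*c - 1) * supp y' C + (2 - 2*c) * supp ((1/2) *\<^sub>R y') C"
        using y y2 by (simp add: \<phi>_def radstrom_def)
      also have "\<dots> = supp x' C"
      proof -
        have s1: "supp x' C = (if C \<noteq> {} \<and> bdd_above ((\<lambda>x. blinfun_apply y' x) ` C)
            then c * supp y' C else Sup ({}::real set))"
          unfolding x by (rule supp_scale_gen[OF c(2)])
        have s2: "supp ((1/2) *\<^sub>R y') C = (if C \<noteq> {} \<and> bdd_above ((\<lambda>x. blinfun_apply y' x) ` C)
            then (1/2) * supp y' C else Sup ({}::real set))"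
          by (rule supp_scale_gen) simp
        have "supp (1 *\<^sub>R y') C = (if C \<noteq> {} \<and> bdd_above ((\<lambda>x. blinfun_apply y' x) ` C)
            then 1 * supp y' C else Sup ({}::real set))"
          by (rule supp_scale_gen) simp
        then have s0: "supp y' C = (if C \<noteq> {} \<and> bdd_above ((\<lambda>x. blinfun_apply y' x) ` C)
            then 1 * supp y' C else Sup ({}::real set))" by (simp only: scaleR_one)
        show ?thesis
        proof (cases "C \<noteq> {} \<and> bdd_above ((\<lambda>x. blinfun_apply y' x) ` C)")
          case True
          then show ?thesis using s1 s2 by (simp add: algebra_simps)
        next
          case False
          then have "supp y' C = Sup ({}::real set)" using s0 if_not_P[OF False] by metis
          then show ?thesis using s1 s2 False by (simp add: algebra_simps)
        qed
      qed
      finally show ?thesis .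
    qed
    have H: "\<forall>\<phi>\<in>linf_dual. signed_integrable_on \<Omega> (\<lambda>A. \<phi> (radstrom (N A))) \<theta> E \<and>
                   \<phi> (radstrom (M E)) = signed_integral_on \<Omega> (\<lambda>A. \<phi> (radstrom (N A))) \<theta> E"
      using assms(7) E unfolding is_BDS_integral_linf_def by blast
    show ?thesis using bspec[OF H phi] by (simp add: key)
  qed
  have E_sp: "E \<subseteq> space \<Omega>" if "E \<in> sets \<Omega>" for E
    using that sets.sets_into_space by blast
  have f1: "(\<lambda>x. indicator E x * max (\<theta> x) 0) = (\<lambda>x. indicator E x * \<theta> x)"
    if "E \<in> sets \<Omega>" for E :: "'a set"
    using E_sp[OF that] assms(5) by (auto simp: indicator_def intro!: ext)
  have f2: "(\<lambda>x. indicator E x * max (- \<theta> x) 0) = (\<lambda>x. 0::real)"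
    if "E \<in> sets \<Omega>" for E :: "'a set"
    using E_sp[OF that] assms(5) by (auto simp: indicator_def intro!: ext)
  have sense: "BDSm_sense \<Omega> N \<theta> E x'" and expr: "BDSm_expr \<Omega> N \<theta> E x' = supp x' (M E)"
    if E: "E \<in> sets \<Omega>" for E x'
    using main[OF E, of x'] f1[OF E] f2[OF E]
    unfolding BDSm_sense_def BDSm_expr_def signed_integrable_on_def signed_integral_on_def
    by auto
  have isI: "is_BDSm_integral \<Omega> N \<theta> E (M E)" if E: "E \<in> sets \<Omega>" for E
    using cbM[OF E] expr[OF E] unfolding is_BDSm_integral_def cb_def by auto
  show ?thesis
    unfolding BDSm_integrable_def using assms(4) sense isI by blast
qed

end
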